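(* Assume $\overline{P}^d\ge\overline{P}^d_e$ replaced by $\overline{P}^d_e$ and $\overline{P}^c$ by $\overline{P}^c_e$ is allowed (this does not change $\mathcal{P}^{0\text{-}1}$). For every $t\in\{1,\ldots,T\}$ and $\overline{\tau}\in\{0,\ldots,T-t\}$, every $(p^d,p^c,s,u)\in\mathcal{P}^{0\text{-}1}$ satisfies $$\sum_{\tau=0}^{\overline{\tau}}p^c_{t+\tau}+\sum_{\tau=0}^{\overline{\tau}}\rho^c(t,\tau,\overline{\tau})(1-u_{t+\tau})\le\sum_{\tau=0}^{\overline{\tau}}c(t,\tau)$$ and $$\sum_{\tau=0}^{\overline{\tau}}p^d_{t+\tau}+\sum_{\tau=0}^{\overline{\tau}}\rho^d(t,\tau,\overline{\tau})\,u_{t+\tau}\le\sum_{\tau=0}^{\overline{\tau}}d(t,\tau).$$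
   Context: Let $T\ge1$, $\Delta>0$, $\eta_c,\eta_d\in(0,1]$, $\overline{P}^d,\overline{P}^c>0$, $\underline{S}<\overline{S}$, $s_0\in[\underline{S},\overline{S}]$. $\mathcal{P}^{0\text{-}1}$ is the set of $(p^d,p^c,s)\in(\mathbb{R}^T_{\ge0})^3$, $u\in\{0,1\}^T$ with $p^d_t\le\overline{P}^d(1-u_t)$, $p^c_t\le\overline{P}^cu_t$, $\underline{S}\le s_t\le\overline{S}$, $s_t=s_{t-1}+\Delta(\eta_cp^c_t-p^d_t/\eta_d)$ for $t=1,\ldots,T$. Let $\overline{P}^d_e=\min\{\overline{P}^d,\eta_d(\overline{S}-\underline{S})/\Delta\}$, $\overline{P}^c_e=\min\{\overline{P}^c,(\overline{S}-\underline{S})/(\Delta\eta_c)\}$, $[x]^+=\max\{x,0\}$. Set $\underline{s}_0(0)=\overline{s}_0(0)=s_0$, $\underline{s}_0(t)=\max\{\underline{s}_0(t-1)-\Delta\overline{P}^d_e/\eta_d,\underline{S}\}$, $\overline{s}_0(t)=\min\{\overline{s}_0(t-1)+\Delta\eta_c\overline{P}^c_e,\overline{S}\}$ for $t=1,\ldots,T-1$. For $t=1..T$, $\overline{\tau}=0..T-t$: $c(t,\overline{\tau})=\min\{\overline{P}^c_e,[(\overline{S}-\underline{s}_0(t-1))/(\Delta\eta_c)-\overline{\tau}\overline{P}^c_e]^+\}$, $d(t,\overline{\tau})=\min\{\overline{P}^d_e,[(\overline{s}_0(t-1)-\underline{S})\eta_d/\Delta-\overline{\tau}\overline{P}^d_e]^+\}$.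 For $\tau=0..T-2$: $\overline{c}(\tau)=\min\{\overline{P}^c_e,[(\overline{S}-\underline{S})/(\Delta\eta_c)-\tau\overline{P}^c_e]^+\}$, $\overline{d}(\tau)=\min\{\overline{P}^d_e,[(\overline{S}-\underline{S})\eta_d/\Delta-\tau\overline{P}^d_e]^+\}$. $\overline{P}^c_e(t)=c(t,0)$, $\overline{P}^d_e(t)=d(t,0)$. For $\tau=0,\ldots,\overline{\tau}$: $\rho^c(t,\tau,\overline{\tau})=\max\{-\overline{P}^d_e(t+\tau)/(\eta_d\eta_c),\sum_{j=\tau}^{\overline{\tau}}c(t,j)-\sum_{j=0}^{\overline{\tau}-\tau-1}\overline{c}(j)\}$, $\rho^d(t,\tau,\overline{\tau})=\max\{-\eta_d\eta_c\overline{P}^c_e(t+\tau),\sum_{j=\tau}^{\overline{\tau}}d(t,j)-\sum_{j=0}^{\overline{\tau}-\tau-1}\overline{d}(j)\}$ (empty sums $=0$). *)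

theory Defs
  imports Main "HOL.Real"
begin

text \<open>Parameters are always passed in the order
  Dt (time step Delta), etac, etad, Pd (max discharge), Pc (max charge), Smin, Smax, s0.
  Time indices of the vectors p^d, p^c, s, u are 1..T; vectors are functions nat => real.\<close>

definition pos :: "real \<Rightarrow> real" where
  "pos x = max x 0"

definition Pde :: "real \<Rightarrow> real \<Rightarrow> real \<Rightarrow> real \<Rightarrow> real \<Rightarrow> real \<Rightarrow> real \<Rightarrow> real \<Rightarrow> real" where
  "Pde Dt etac etad Pd Pc Smin Smax s0 = min Pd (etad * (Smax - Smin) / Dt)"

definition Pce :: "real \<Rightarrow> real \<Rightarrow> real \<Rightarrow> real \<Rightarrow> real \<Rightarrow> real \<Rightarrow> real \<Rightarrow> real \<Rightarrow> real" where
  "Pce Dt etac etad Pd Pc Smin Smax s0 = min Pc ((Smax - Smin) / (Dt * etac))"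

fun slow :: "real \<Rightarrow> real \<Rightarrow> real \<Rightarrow> real \<Rightarrow> real \<Rightarrow> real \<Rightarrow> real \<Rightarrow> real \<Rightarrow> nat \<Rightarrow> real" where
  "slow Dt etac etad Pd Pc Smin Smax s0 0 = s0"
| "slow Dt etac etad Pd Pc Smin Smax s0 (Suc t) =
     max (slow Dt etac etad Pd Pc Smin Smax s0 t - Dt * Pde Dt etac etad Pd Pc Smin Smax s0 / etad) Smin"

fun supp :: "real \<Rightarrow> real \<Rightarrow> real \<Rightarrow> real \<Rightarrow> real \<Rightarrow> real \<Rightarrow> real \<Rightarrow> real \<Rightarrow> nat \<Rightarrow> real" where
  "supp Dt etac etad Pd Pc Smin Smax s0 0 = s0"
| "supp Dt etac etad Pd Pc Smin Smax s0 (Suc t) =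
     min (supp Dt etac etad Pd Pc Smin Smax s0 t + Dt * etac * Pce Dt etac etad Pd Pc Smin Smax s0) Smax"

definition cc :: "real \<Rightarrow> real \<Rightarrow> real \<Rightarrow> real \<Rightarrow> real \<Rightarrow> real \<Rightarrow> real \<Rightarrow> real \<Rightarrow> nat \<Rightarrow> nat \<Rightarrow> real" where
  "cc Dt etac etad Pd Pc Smin Smax s0 t taub =
     min (Pce Dt etac etad Pd Pc Smin Smax s0)
         (pos ((Smax - slow Dt etac etad Pd Pc Smin Smax s0 (t - 1)) / (Dt * etac)
               - real taub * Pce Dt etac etad Pd Pc Smin Smax s0))"

definition dd :: "real \<Rightarrow> real \<Rightarrow> real \<Rightarrow> real \<Rightarrow> real \<Rightarrow> real \<Rightarrow> real \<Rightarrow> real \<Rightarrow> nat \<Rightarrow> nat \<Rightarrow> real" where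
  "dd Dt etac etad Pd Pc Smin Smax s0 t taub =
     min (Pde Dt etac etad Pd Pc Smin Smax s0)
         (pos ((supp Dt etac etad Pd Pc Smin Smax s0 (t - 1) - Smin) * etad / Dt
               - real taub * Pde Dt etac etad Pd Pc Smin Smax s0))"

definition cbar :: "real \<Rightarrow> real \<Rightarrow> real \<Rightarrow> real \<Rightarrow> real \<Rightarrow> real \<Rightarrow> real \<Rightarrow> real \<Rightarrow> nat \<Rightarrow> real" where
  "cbar Dt etac etad Pd Pc Smin Smax s0 tau =
     min (Pce Dt etac etad Pd Pc Smin Smax s0)
         (pos ((Smax - Smin) / (Dt * etac) - real tau * Pce Dt etac etad Pd Pc Smin Smax s0))"

definition dbar :: "real \<Rightarrow> real \<Rightarrow> real \<Rightarrow> real \<Rightarrow> real \<Rightarrow> real \<Rightarrow> real \<Rightarrow> real \<Rightarrow> nat \<Rightarrow> real" where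
  "dbar Dt etac etad Pd Pc Smin Smax s0 tau =
     min (Pde Dt etac etad Pd Pc Smin Smax s0)
         (pos ((Smax - Smin) * etad / Dt - real tau * Pde Dt etac etad Pd Pc Smin Smax s0))"

text \<open>rho^c(t,tau,taub) and rho^d(t,tau,taub); P^c_e(t) = c(t,0), P^d_e(t) = d(t,0).
  The sum over j = 0 .. taub - tau - 1 is written over {..< taub - tau} (empty when tau = taub).\<close>
definition rhoc :: "real \<Rightarrow> real \<Rightarrow> real \<Rightarrow> real \<Rightarrow> real \<Rightarrow> real \<Rightarrow> real \<Rightarrow> real \<Rightarrow> nat \<Rightarrow> nat \<Rightarrow> nat \<Rightarrow> real" where
  "rhoc Dt etac etad Pd Pc Smin Smax s0 t tau taub =
     max (- dd Dt etac etad Pd Pc Smin Smax s0 (t + tau) 0 / (etad * etac))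
         ((\<Sum>j\<in>{tau..taub}. cc Dt etac etad Pd Pc Smin Smax s0 t j)
          - (\<Sum>j\<in>{..<taub - tau}. cbar Dt etac etad Pd Pc Smin Smax s0 j))"

definition rhod :: "real \<Rightarrow> real \<Rightarrow> real \<Rightarrow> real \<Rightarrow> real \<Rightarrow> real \<Rightarrow> real \<Rightarrow> real \<Rightarrow> nat \<Rightarrow> nat \<Rightarrow> nat \<Rightarrow> real" where
  "rhod Dt etac etad Pd Pc Smin Smax s0 t tau taub =
     max (- (etad * etac) * cc Dt etac etad Pd Pc Smin Smax s0 (t + tau) 0)
         ((\<Sum>j\<in>{tau..taub}. dd Dt etac etad Pd Pc Smin Smax s0 t j)
          - (\<Sum>j\<in>{..<taub - tau}. dbar Dt etac etad Pd Pc Smin Smax s0 j))"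

definition in_P01 :: "nat \<Rightarrow> real \<Rightarrow> real \<Rightarrow> real \<Rightarrow> real \<Rightarrow> real \<Rightarrow> real \<Rightarrow> real \<Rightarrow> real \<Rightarrow>
    (nat \<Rightarrow> real) \<Rightarrow> (nat \<Rightarrow> real) \<Rightarrow> (nat \<Rightarrow> real) \<Rightarrow> (nat \<Rightarrow> real) \<Rightarrow> bool" where
  "in_P01 T Dt etac etad Pd Pc Smin Smax s0 pd pc s u \<longleftrightarrow>
     (\<forall>t\<in>{1..T}.
        0 \<le> pd t \<and> 0 \<le> pc t \<and> 0 \<le> s t \<and> (u t = 0 \<or> u t = 1) \<and>
        pd t \<le> Pd * (1 - u t) \<and> pc t \<le> Pc * u t \<and>
        Smin \<le> s t \<and> s t \<le> Smax \<and>
        s t = (if t = 1 then s0 else s (t - 1)) + Dt * (etac * pc t - pd t / etad))"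

end

theory Submission
  imports Defs
begin


lemma key:
  fixes w e f :: "nat \<Rightarrow> real" and n :: nat and P K M :: real
  assumes P0: "0 \<le> P"
    and wP: "\<forall>\<tau>\<le>n. w \<tau> \<le> P"
    and eP: "\<forall>\<tau>\<le>n. e \<tau> \<le> P"
    and alt: "\<forall>\<tau>\<le>n. w \<tau> \<le> e \<tau> \<or> w \<tau> = min (real (Suc n) * P) K - min (real \<tau> * P) K - min (real (n-\<tau>) * P) M"
    and ef: "\<forall>\<tau>\<le>n. e \<tau> = f (Suc \<tau>) - f \<tau>"
    and fK: "\<forall>m\<le>Suc n. f m - f 0 \<le> K"
    and fM: "\<forall>a\<le>Suc n. \<forall>b\<le>Suc n. f b - f a \<le> M"
  shows "(\<Sum>\<tau><Suc n. w \<tau>) \<le> min (real (Suc n) * P) K"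
proof -
  have wm: "(\<Sum>\<tau><m. w \<tau>) \<le> real m * P" if "m \<le> Suc n" for m
  proof -
    have "(\<Sum>\<tau><m. w \<tau>) \<le> (\<Sum>\<tau><m. P)" by (rule sum_mono) (use wP that in auto)
    then show ?thesis by simp
  qed
  have em: "(\<Sum>\<tau>\<in>{a..<m}. e \<tau>) = f m - f a" if "a \<le> m" "m \<le> Suc n" for a m
  proof -
    have "(\<Sum>\<tau>\<in>{a..<m}. e \<tau>) = (\<Sum>\<tau>\<in>{a..<m}. f (Suc \<tau>) - f \<tau>)"
      by (rule sum.cong) (use ef that in auto)
    also have "\<dots> = f m - f a" by (rule sum_Suc_diff') (use that in auto)
    finally show ?thesis .
  qed
  have epm: "(\<Sum>\<tau>\<in>{a..<m}. e \<tau>) \<le> real (m - a) * P" if "m \<le> Suc n" for a m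
  proof -
    have "(\<Sum>\<tau>\<in>{a..<m}. e \<tau>) \<le> (\<Sum>\<tau>\<in>{a..<m}. P)" by (rule sum_mono) (use eP that in auto)
    then show ?thesis by simp
  qed
  have main: "m \<le> Suc n \<Longrightarrow> (\<Sum>\<tau><m. w \<tau>) \<le> min (real m * P) K" for m
  proof (induction m rule: less_induct)
    case (less m)
    show ?case
    proof (cases "\<exists>\<tau><m. \<not> w \<tau> \<le> e \<tau>")
      case False
      have "(\<Sum>\<tau><m. w \<tau>) \<le> (\<Sum>\<tau><m. e \<tau>)" by (rule sum_mono) (use False in auto)
      also have "\<dots> = f m - f 0" using em[of 0 m] less.prems by (simp add: atLeast0LessThan)
      also have "\<dots> \<le> K" using fK less.prems by auto
      finally show ?thesis using wm[OF less.prems] by simp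
    next
      case True
      define S where "S = {\<tau>. \<tau> < m \<and> \<not> w \<tau> \<le> e \<tau>}"
      have fS: "finite S" unfolding S_def by auto
      have neS: "S \<noteq> {}" using True unfolding S_def by auto
      define t0 where "t0 = Max S"
      have t0S: "t0 \<in> S" unfolding t0_def using fS neS Max_in by blast
      have t0m: "t0 < m" and nt0: "\<not> w t0 \<le> e t0" using t0S unfolding S_def by auto
      have after: "\<And>\<tau>. t0 < \<tau> \<Longrightarrow> \<tau> < m \<Longrightarrow> w \<tau> \<le> e \<tau>"
      proof (rule ccontr)
        fix \<tau> assume "t0 < \<tau>" "\<tau> < m" "\<not> w \<tau> \<le> e \<tau>"
        then have "\<tau> \<in> S" unfolding S_def by auto
        then have "\<tau> \<le> t0" unfolding t0_def using fS by auto
        with \<open>t0 < \<tau>\<close> show False by simp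
      qed
      have t0n: "t0 \<le> n" using t0m less.prems by simp
      have wt0: "w t0 = min (real (Suc n) * P) K - min (real t0 * P) K - min (real (n-t0) * P) M"
        using alt t0n nt0 by auto
      have IH: "(\<Sum>\<tau><t0. w \<tau>) \<le> min (real t0 * P) K" using less.IH[of t0] t0m less.prems by simp
      have split: "(\<Sum>\<tau><m. w \<tau>) = (\<Sum>\<tau><t0. w \<tau>) + w t0 + (\<Sum>\<tau>\<in>{Suc t0..<m}. w \<tau>)"
      proof -
        have "{..<m} = {..<t0} \<union> {t0} \<union> {Suc t0..<m}" using t0m by auto
        moreover have "{..<t0} \<inter> {Suc t0..<m} = {}" by auto
        ultimately show ?thesis by (simp add: sum.union_disjoint)
      qed
      have rest: "(\<Sum>\<tau>\<in>{Suc t0..<m}. w \<tau>) \<le> (\<Sum>\<tau>\<in>{Suc t0..<m}. e \<tau>)"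
        by (rule sum_mono) (use after in auto)
      have r1: "(\<Sum>\<tau>\<in>{Suc t0..<m}. e \<tau>) \<le> M"
        using em[of "Suc t0" m] t0m less.prems fM by auto
      have r2: "(\<Sum>\<tau>\<in>{Suc t0..<m}. e \<tau>) \<le> real (n - t0) * P"
      proof -
        have "real (m - Suc t0) \<le> real (n - t0)" using less.prems t0m by simp
        then have "real (m - Suc t0) * P \<le> real (n - t0) * P" using P0 by (rule mult_right_mono)
        then show ?thesis using epm[of m "Suc t0"] less.prems by simp
      qed
      have "(\<Sum>\<tau><m. w \<tau>) \<le> min (real (Suc n) * P) K"
        using split rest r1 r2 IH wt0 by (simp add: min_def split: if_splits)
      then show ?thesis using wm[OF less.prems] by simp
    qed
  qed
  show ?thesis using main[of "Suc n"] by simp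
qed



lemma sum_minpos:
  fixes P K :: real
  assumes "0 \<le> K" "0 \<le> P"
  shows "(\<Sum>j<m. min P (pos (K - real j * P))) = min (real m * P) K"
proof (induction m)
  case 0 then show ?case using assms by simp
next
  case (Suc m)
  have "min (real m * P) K + min P (pos (K - real m * P)) = min (real (Suc m) * P) K"
    using assms by (auto simp: pos_def min_def max_def algebra_simps)
  then show ?case using Suc by simp
qed

lemma sum_ivl_split:
  fixes g :: "nat \<Rightarrow> real"
  assumes "\<tau> \<le> n"
  shows "(\<Sum>j\<in>{\<tau>..n}. g j) = (\<Sum>j<Suc n. g j) - (\<Sum>j<\<tau>. g j)"
proof -
  have "{..<Suc n} = {..<\<tau>} \<union> {\<tau>..n}" using assms by auto
  moreover have "{..<\<tau>} \<inter> {\<tau>..n} = {}" by auto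
  ultimately have "(\<Sum>j<Suc n. g j) = (\<Sum>j<\<tau>. g j) + (\<Sum>j\<in>{\<tau>..n}. g j)"
    by (simp add: sum.union_disjoint)
  then show ?thesis by simp
qed

lemma B_le:
  fixes P K M :: real
  assumes "0 \<le> K" "K \<le> M" "0 \<le> P" "\<tau> \<le> n"
  shows "min (real (Suc n) * P) K - min (real \<tau> * P) K - min (real (n-\<tau>) * P) M \<le> P"
proof -
  have e: "real (Suc n) * P = real \<tau> * P + real (n - \<tau>) * P + P"
    using assms by (simp add: of_nat_diff algebra_simps)
  have "0 \<le> real (n - \<tau>) * P" using assms by simp
  have "0 \<le> real \<tau> * P" using assms by simp
  have gen: "\<And>a b::real. 0 \<le> a \<Longrightarrow> 0 \<le> b \<Longrightarrow> min (a + b + P) K - min a K - min b M \<le> P"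
    using assms(1,2,3) by (simp add: min_def)
  show ?thesis unfolding e using gen \<open>0 \<le> real (n - \<tau>) * P\<close> \<open>0 \<le> real \<tau> * P\<close> by blast
qed



context
  fixes T :: nat and Dt etac etad Pd Pc Smin Smax s0 :: real
    and pd pc s u :: "nat \<Rightarrow> real"
  assumes Dt: "0 < Dt"
    and ec: "0 < etac" and ed: "0 < etad"
    and Pd: "0 < Pd" and Pc: "0 < Pc"
    and SS: "Smin < Smax" and s0l: "Smin \<le> s0" and s0u: "s0 \<le> Smax"
    and P01: "in_P01 T Dt etac etad Pd Pc Smin Smax s0 pd pc s u"
begin

definition sp :: "nat \<Rightarrow> real" where "sp k = (if k = 0 then s0 else s k)"

lemma step:
  assumes "1 \<le> k" "k \<le> T"
  shows "0 \<le> pd k" "0 \<le> pc k" "u k = 0 \<or> u k = 1" "pd k \<le> Pd * (1 - u k)" "pc k \<le> Pc * u k"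
    "Smin \<le> sp k" "sp k \<le> Smax" "sp k = sp (k - 1) + Dt * (etac * pc k - pd k / etad)"
proof -
  have H: "0 \<le> pd k \<and> 0 \<le> pc k \<and> 0 \<le> s k \<and> (u k = 0 \<or> u k = 1) \<and>
        pd k \<le> Pd * (1 - u k) \<and> pc k \<le> Pc * u k \<and>
        Smin \<le> s k \<and> s k \<le> Smax \<and>
        s k = (if k = 1 then s0 else s (k - 1)) + Dt * (etac * pc k - pd k / etad)"
  proof -
    have "k \<in> {1..T}" using assms by simp
    then show ?thesis using P01 unfolding in_P01_def by blast
  qed
  have e1: "(if k = 1 then s0 else s (k - 1)) = sp (k - 1)" unfolding sp_def using assms by auto
  have e2: "sp k = s k" unfolding sp_def using assms by auto
  show "0 \<le> pd k" "0 \<le> pc k" "u k = 0 \<or> u k = 1" "pd k \<le> Pd * (1 - u k)" "pc k \<le> Pc * u k"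
    "Smin \<le> sp k" "sp k \<le> Smax" "sp k = sp (k - 1) + Dt * (etac * pc k - pd k / etad)"
    using H unfolding e1 e2 by auto
qed

lemma sp_bounds: "k \<le> T \<Longrightarrow> Smin \<le> sp k \<and> sp k \<le> Smax"
  using step[of k] s0l s0u by (cases "k = 0") (auto simp: sp_def)

lemma pd_bound:
  assumes "1 \<le> k" "k \<le> T"
  shows "pd k \<le> etad * (sp (k - 1) - Smin) / Dt"
proof (cases "u k = 1")
  case True
  then have "pd k = 0" using step[OF assms] by auto
  moreover have "Smin \<le> sp (k-1)" using sp_bounds[of "k-1"] assms by auto
  ultimately show ?thesis using Dt ed by simp
next
  case False
  then have "u k = 0" using step[OF assms] by auto
  then have "pc k = 0" using step[OF assms] by auto
  then have "sp k = sp (k - 1) - Dt * pd k / etad" using step[OF assms] by simp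
  then have "Dt * pd k / etad \<le> sp (k - 1) - Smin" using step(6)[OF assms] by linarith
  then have "Dt * pd k \<le> etad * (sp (k - 1) - Smin)" using ed by (simp add: field_simps)
  then show ?thesis using Dt by (simp add: field_simps mult.commute)
qed

lemma pc_bound:
  assumes "1 \<le> k" "k \<le> T"
  shows "pc k \<le> (Smax - sp (k - 1)) / (Dt * etac)"
proof (cases "u k = 0")
  case True
  then have "pc k = 0" using step[OF assms] by auto
  moreover have "sp (k-1) \<le> Smax" using sp_bounds[of "k-1"] assms by auto
  ultimately show ?thesis using Dt ec by simp
next
  case False
  then have "u k = 1" using step[OF assms] by auto
  then have "pd k = 0" using step[OF assms] by auto
  then have "sp k = sp (k - 1) + Dt * etac * pc k" using step[OF assms] by simp
  then have "Dt * etac * pc k \<le> Smax - sp (k - 1)" using step(7)[OF assms] by linarith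
  then show ?thesis using Dt ec by (simp add: field_simps mult.commute)
qed

lemma Pde_pos: "0 < Pde Dt etac etad Pd Pc Smin Smax s0"
  unfolding Pde_def using Pd ed SS Dt by simp
lemma Pce_pos: "0 < Pce Dt etac etad Pd Pc Smin Smax s0"
  unfolding Pce_def using Pc ec SS Dt by simp

lemma pd_Pde:
  assumes "1 \<le> k" "k \<le> T"
  shows "pd k \<le> Pde Dt etac etad Pd Pc Smin Smax s0"
proof -
  have "pd k \<le> Pd" using step[OF assms] Pd by (auto simp: algebra_simps)
  moreover have "pd k \<le> etad * (Smax - Smin) / Dt"
  proof -
    have "sp (k-1) \<le> Smax" using sp_bounds[of "k-1"] assms by auto
    then have "etad * (sp (k - 1) - Smin) / Dt \<le> etad * (Smax - Smin) / Dt"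
      using Dt ed by (simp add: divide_right_mono)
    then show ?thesis using pd_bound[OF assms] by linarith
  qed
  ultimately show ?thesis unfolding Pde_def by simp
qed

lemma pc_Pce:
  assumes "1 \<le> k" "k \<le> T"
  shows "pc k \<le> Pce Dt etac etad Pd Pc Smin Smax s0"
proof -
  have "pc k \<le> Pc" using step[OF assms] Pc by (auto simp: algebra_simps)
  moreover have "pc k \<le> (Smax - Smin) / (Dt * etac)"
  proof -
    have "Smin \<le> sp (k-1)" using sp_bounds[of "k-1"] assms by auto
    then have "(Smax - sp (k - 1)) / (Dt * etac) \<le> (Smax - Smin) / (Dt * etac)"
      using Dt ec by (simp add: divide_right_mono)
    then show ?thesis using pc_bound[OF assms] by linarith
  qed
  ultimately show ?thesis unfolding Pce_def by simp
qed

lemma slow_le: "k \<le> T \<Longrightarrow> slow Dt etac etad Pd Pc Smin Smax s0 k \<le> sp k"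
proof (induction k)
  case 0 then show ?case by (simp add: sp_def)
next
  case (Suc k)
  have "Smin \<le> sp (Suc k)" using step(6)[of "Suc k"] Suc.prems by simp
  moreover have "slow Dt etac etad Pd Pc Smin Smax s0 k - Dt * Pde Dt etac etad Pd Pc Smin Smax s0 / etad \<le> sp (Suc k)"
  proof -
    have e: "sp (Suc k) = sp k + Dt * (etac * pc (Suc k) - pd (Suc k) / etad)"
      using step(8)[of "Suc k"] Suc.prems by simp
    have "Dt * (pd (Suc k) / etad) \<le> Dt * (Pde Dt etac etad Pd Pc Smin Smax s0 / etad)"
      using pd_Pde[of "Suc k"] Suc.prems Dt ed by (simp add: divide_right_mono)
    moreover have "0 \<le> Dt * (etac * pc (Suc k))" using step(2)[of "Suc k"] Suc.prems Dt ec by simp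
    ultimately show ?thesis using e Suc.IH Suc.prems by (simp add: algebra_simps)
  qed
  ultimately show ?case by simp
qed

lemma supp_ge: "k \<le> T \<Longrightarrow> sp k \<le> supp Dt etac etad Pd Pc Smin Smax s0 k"
proof (induction k)
  case 0 then show ?case by (simp add: sp_def)
next
  case (Suc k)
  have "sp (Suc k) \<le> Smax" using step(7)[of "Suc k"] Suc.prems by simp
  moreover have "sp (Suc k) \<le> supp Dt etac etad Pd Pc Smin Smax s0 k + Dt * etac * Pce Dt etac etad Pd Pc Smin Smax s0"
  proof -
    have e: "sp (Suc k) = sp k + Dt * (etac * pc (Suc k) - pd (Suc k) / etad)"
      using step(8)[of "Suc k"] Suc.prems by simp
    have "Dt * etac * pc (Suc k) \<le> Dt * etac * Pce Dt etac etad Pd Pc Smin Smax s0"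
      using pc_Pce[of "Suc k"] Suc.prems Dt ec by simp
    moreover have "0 \<le> Dt * (pd (Suc k) / etad)" using step(1)[of "Suc k"] Suc.prems Dt ed by simp
    ultimately show ?thesis using e Suc.IH Suc.prems by (simp add: algebra_simps)
  qed
  ultimately show ?case by simp
qed

lemma slow_bounds: "Smin \<le> slow Dt etac etad Pd Pc Smin Smax s0 k \<and> slow Dt etac etad Pd Pc Smin Smax s0 k \<le> Smax"
proof (induction k)
  case 0 then show ?case using s0l s0u by simp
next
  case (Suc k)
  have "0 \<le> Dt * Pde Dt etac etad Pd Pc Smin Smax s0 / etad" using Dt ed Pde_pos by simp
  then show ?case using Suc SS by auto
qed

lemma supp_bounds: "Smin \<le> supp Dt etac etad Pd Pc Smin Smax s0 k \<and> supp Dt etac etad Pd Pc Smin Smax s0 k \<le> Smax"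
proof (induction k)
  case 0 then show ?case using s0l s0u by simp
next
  case (Suc k)
  have "0 \<le> Dt * etac * Pce Dt etac etad Pd Pc Smin Smax s0" using Dt ec Pce_pos by simp
  then show ?case using Suc SS by auto
qed


lemma charge:
  assumes t1: "1 \<le> t" and tn: "t + n \<le> T"
  shows "(\<Sum>tau\<in>{0..n}. pc (t + tau))
           + (\<Sum>tau\<in>{0..n}. rhoc Dt etac etad Pd Pc Smin Smax s0 t tau n * (1 - u (t + tau)))
         \<le> (\<Sum>tau\<in>{0..n}. cc Dt etac etad Pd Pc Smin Smax s0 t tau)"
proof -
  define P where "P = Pce Dt etac etad Pd Pc Smin Smax s0"
  define K where "K = (Smax - slow Dt etac etad Pd Pc Smin Smax s0 (t - 1)) / (Dt * etac)"
  define M where "M = (Smax - Smin) / (Dt * etac)"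
  have P0: "0 \<le> P" using Pce_pos unfolding P_def by simp
  have K0: "0 \<le> K" using slow_bounds[of "t-1"] Dt ec unfolding K_def by simp
  have KM: "K \<le> M" using slow_bounds[of "t-1"] Dt ec unfolding K_def M_def by (simp add: divide_right_mono)
  have ccsum: "(\<Sum>j<m. cc Dt etac etad Pd Pc Smin Smax s0 t j) = min (real m * P) K" for m
    using sum_minpos[OF K0 P0, of m] unfolding cc_def P_def K_def by simp
  have cbsum: "(\<Sum>j<m. cbar Dt etac etad Pd Pc Smin Smax s0 j) = min (real m * P) M" for m
    using sum_minpos[of M P m] KM K0 P0 unfolding cbar_def P_def M_def by simp
  define B where "B = (\<lambda>\<tau>. min (real (Suc n) * P) K - min (real \<tau> * P) K - min (real (n-\<tau>) * P) M)"
  have rho: "rhoc Dt etac etad Pd Pc Smin Smax s0 t \<tau> n = max (- dd Dt etac etad Pd Pc Smin Smax s0 (t + \<tau>) 0 / (etad * etac)) (B \<tau>)"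
    if "\<tau> \<le> n" for \<tau>
  proof -
    have "(\<Sum>j\<in>{\<tau>..n}. cc Dt etac etad Pd Pc Smin Smax s0 t j) = min (real (Suc n) * P) K - min (real \<tau> * P) K"
      using sum_ivl_split[OF that, of "cc Dt etac etad Pd Pc Smin Smax s0 t"] ccsum[of "Suc n"] ccsum[of \<tau>] by linarith
    then show ?thesis unfolding rhoc_def B_def using cbsum by simp
  qed
  define w where "w = (\<lambda>\<tau>. pc (t + \<tau>) + rhoc Dt etac etad Pd Pc Smin Smax s0 t \<tau> n * (1 - u (t + \<tau>)))"
  define e where "e = (\<lambda>\<tau>. pc (t + \<tau>) - pd (t + \<tau>) / (etad * etac))"
  define f where "f = (\<lambda>\<tau>. sp (t + \<tau> - 1) / (Dt * etac))"
  have ddpos: "0 \<le> dd Dt etac etad Pd Pc Smin Smax s0 k 0" for k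
    unfolding dd_def pos_def using Pde_pos by simp
  have pd_dd: "pd (t + \<tau>) \<le> dd Dt etac etad Pd Pc Smin Smax s0 (t + \<tau>) 0" if "\<tau> \<le> n" for \<tau>
  proof -
    have k: "1 \<le> t + \<tau>" "t + \<tau> \<le> T" using t1 tn that by auto
    have "sp (t + \<tau> - 1) \<le> supp Dt etac etad Pd Pc Smin Smax s0 (t + \<tau> - 1)" using supp_ge k by simp
    then have "etad * (sp (t + \<tau> - 1) - Smin) / Dt \<le> (supp Dt etac etad Pd Pc Smin Smax s0 (t + \<tau> - 1) - Smin) * etad / Dt"
      using Dt ed by (simp add: divide_right_mono mult.commute)
    then show ?thesis using pd_bound[OF k] pd_Pde[OF k] unfolding dd_def pos_def by simp
  qed
  have BP: "B \<tau> \<le> P" if "\<tau> \<le> n" for \<tau> unfolding B_def using B_le[OF K0 KM P0 that] .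
  have wP: "\<forall>\<tau>\<le>n. w \<tau> \<le> P"
  proof (intro allI impI)
    fix \<tau> assume h: "\<tau> \<le> n"
    have k: "1 \<le> t + \<tau>" "t + \<tau> \<le> T" using t1 tn h by auto
    show "w \<tau> \<le> P"
    proof (cases "u (t + \<tau>) = 1")
      case True then show ?thesis using pc_Pce[OF k] unfolding w_def P_def by simp
    next
      case False
      then have "u (t + \<tau>) = 0" using step(3)[OF k] by auto
      then have "pc (t + \<tau>) = 0" using step(5)[OF k] step(2)[OF k] by auto
      moreover have "- dd Dt etac etad Pd Pc Smin Smax s0 (t + \<tau>) 0 / (etad * etac) \<le> P"
      proof -
        have "0 \<le> dd Dt etac etad Pd Pc Smin Smax s0 (t + \<tau>) 0 / (etad * etac)"
          using ddpos[of "t+\<tau>"] ed ec by simp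
        then show ?thesis using P0 by linarith
      qed
      ultimately show ?thesis unfolding w_def using rho[OF h] BP[OF h] \<open>u (t + \<tau>) = 0\<close> by simp
    qed
  qed
  have eP: "\<forall>\<tau>\<le>n. e \<tau> \<le> P"
  proof (intro allI impI)
    fix \<tau> assume h: "\<tau> \<le> n"
    have k: "1 \<le> t + \<tau>" "t + \<tau> \<le> T" using t1 tn h by auto
    have "0 \<le> pd (t + \<tau>) / (etad * etac)" using step(1)[OF k] ed ec by simp
    then show "e \<tau> \<le> P" using pc_Pce[OF k] unfolding e_def P_def by simp
  qed
  have alt: "\<forall>\<tau>\<le>n. w \<tau> \<le> e \<tau> \<or> w \<tau> = B \<tau>"
  proof (intro allI impI)
    fix \<tau> assume h: "\<tau> \<le> n"
    have k: "1 \<le> t + \<tau>" "t + \<tau> \<le> T" using t1 tn h by auto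
    show "w \<tau> \<le> e \<tau> \<or> w \<tau> = B \<tau>"
    proof (cases "u (t + \<tau>) = 1")
      case True
      then have "pd (t + \<tau>) = 0" using step(4)[OF k] step(1)[OF k] by auto
      then show ?thesis using True unfolding w_def e_def by simp
    next
      case False
      then have u0: "u (t + \<tau>) = 0" using step(3)[OF k] by auto
      then have pc0: "pc (t + \<tau>) = 0" using step(5)[OF k] step(2)[OF k] by auto
      have "- dd Dt etac etad Pd Pc Smin Smax s0 (t + \<tau>) 0 / (etad * etac) \<le> - pd (t + \<tau>) / (etad * etac)"
        using pd_dd[OF h] ed ec by (simp add: divide_right_mono)
      then show ?thesis unfolding w_def e_def using rho[OF h] u0 pc0 by (auto simp: max_def)
    qed
  qed
  have ef: "\<forall>\<tau>\<le>n. e \<tau> = f (Suc \<tau>) - f \<tau>"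
  proof (intro allI impI)
    fix \<tau> assume h: "\<tau> \<le> n"
    have k: "1 \<le> t + \<tau>" "t + \<tau> \<le> T" using t1 tn h by auto
    have "f (Suc \<tau>) - f \<tau> = (sp (t + \<tau>) - sp (t + \<tau> - 1)) / (Dt * etac)"
      unfolding f_def using t1 by (simp add: diff_divide_distrib)
    also have "\<dots> = Dt * (etac * pc (t + \<tau>) - pd (t + \<tau>) / etad) / (Dt * etac)"
      using step(8)[OF k] by simp
    also have "\<dots> = e \<tau>" unfolding e_def using Dt ec ed by (simp add: field_simps)
    finally show "e \<tau> = f (Suc \<tau>) - f \<tau>" by simp
  qed
  have fK: "\<forall>m\<le>Suc n. f m - f 0 \<le> K"
  proof (intro allI impI)
    fix m assume h: "m \<le> Suc n"
    have a: "sp (t + m - 1) \<le> Smax" using sp_bounds[of "t + m - 1"] h tn t1 by auto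
    have b: "slow Dt etac etad Pd Pc Smin Smax s0 (t - 1) \<le> sp (t - 1)" using slow_le[of "t-1"] tn by simp
    have "f m - f 0 = (sp (t + m - 1) - sp (t - 1)) / (Dt * etac)" unfolding f_def by (simp add: diff_divide_distrib)
    also have "\<dots> \<le> K" unfolding K_def using a b Dt ec by (simp add: divide_right_mono)
    finally show "f m - f 0 \<le> K" .
  qed
  have fM: "\<forall>a\<le>Suc n. \<forall>b\<le>Suc n. f b - f a \<le> M"
  proof (intro allI impI)
    fix a b assume h: "a \<le> Suc n" "b \<le> Suc n"
    have x: "sp (t + b - 1) \<le> Smax" using sp_bounds[of "t + b - 1"] h tn t1 by auto
    have y: "Smin \<le> sp (t + a - 1)" using sp_bounds[of "t + a - 1"] h tn t1 by auto
    have "f b - f a = (sp (t + b - 1) - sp (t + a - 1)) / (Dt * etac)" unfolding f_def by (simp add: diff_divide_distrib)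
    also have "\<dots> \<le> M" unfolding M_def using x y Dt ec by (simp add: divide_right_mono)
    finally show "f b - f a \<le> M" .
  qed
  have "(\<Sum>\<tau><Suc n. w \<tau>) \<le> min (real (Suc n) * P) K"
    by (rule key[OF P0 wP eP _ ef fK fM]) (use alt in \<open>simp add: B_def\<close>)
  moreover have "(\<Sum>\<tau><Suc n. w \<tau>) = (\<Sum>tau\<in>{0..n}. pc (t + tau))
           + (\<Sum>tau\<in>{0..n}. rhoc Dt etac etad Pd Pc Smin Smax s0 t tau n * (1 - u (t + tau)))"
    unfolding w_def by (simp add: sum.distrib atLeast0AtMost lessThan_Suc_atMost)
  moreover have "(\<Sum>tau\<in>{0..n}. cc Dt etac etad Pd Pc Smin Smax s0 t tau) = min (real (Suc n) * P) K"
    using ccsum[of "Suc n"] by (simp add: atLeast0AtMost lessThan_Suc_atMost)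
  ultimately show ?thesis by simp
qed


lemma discharge:
  assumes t1: "1 \<le> t" and tn: "t + n \<le> T"
  shows "(\<Sum>tau\<in>{0..n}. pd (t + tau))
           + (\<Sum>tau\<in>{0..n}. rhod Dt etac etad Pd Pc Smin Smax s0 t tau n * u (t + tau))
         \<le> (\<Sum>tau\<in>{0..n}. dd Dt etac etad Pd Pc Smin Smax s0 t tau)"
proof -
  define P where "P = Pde Dt etac etad Pd Pc Smin Smax s0"
  define K where "K = (supp Dt etac etad Pd Pc Smin Smax s0 (t - 1) - Smin) * etad / Dt"
  define M where "M = (Smax - Smin) * etad / Dt"
  have P0: "0 \<le> P" using Pde_pos unfolding P_def by simp
  have K0: "0 \<le> K" using supp_bounds[of "t-1"] Dt ed unfolding K_def by simp
  have KM: "K \<le> M" using supp_bounds[of "t-1"] Dt ed unfolding K_def M_def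
    by (simp add: divide_right_mono mult_right_mono)
  have ccsum: "(\<Sum>j<m. dd Dt etac etad Pd Pc Smin Smax s0 t j) = min (real m * P) K" for m
    using sum_minpos[OF K0 P0, of m] unfolding dd_def P_def K_def by simp
  have cbsum: "(\<Sum>j<m. dbar Dt etac etad Pd Pc Smin Smax s0 j) = min (real m * P) M" for m
    using sum_minpos[of M P m] KM K0 P0 unfolding dbar_def P_def M_def by simp
  define B where "B = (\<lambda>\<tau>. min (real (Suc n) * P) K - min (real \<tau> * P) K - min (real (n-\<tau>) * P) M)"
  have rho: "rhod Dt etac etad Pd Pc Smin Smax s0 t \<tau> n = max (- (etad * etac) * cc Dt etac etad Pd Pc Smin Smax s0 (t + \<tau>) 0) (B \<tau>)"
    if "\<tau> \<le> n" for \<tau>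
  proof -
    have "(\<Sum>j\<in>{\<tau>..n}. dd Dt etac etad Pd Pc Smin Smax s0 t j) = min (real (Suc n) * P) K - min (real \<tau> * P) K"
      using sum_ivl_split[OF that, of "dd Dt etac etad Pd Pc Smin Smax s0 t"] ccsum[of "Suc n"] ccsum[of \<tau>] by linarith
    then show ?thesis unfolding rhod_def B_def using cbsum by simp
  qed
  define w where "w = (\<lambda>\<tau>. pd (t + \<tau>) + rhod Dt etac etad Pd Pc Smin Smax s0 t \<tau> n * u (t + \<tau>))"
  define e where "e = (\<lambda>\<tau>. pd (t + \<tau>) - etad * etac * pc (t + \<tau>))"
  define f where "f = (\<lambda>\<tau>. - sp (t + \<tau> - 1) * etad / Dt)"
  have ccpos: "0 \<le> cc Dt etac etad Pd Pc Smin Smax s0 k 0" for k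
    unfolding cc_def pos_def using Pce_pos by simp
  have pc_cc: "pc (t + \<tau>) \<le> cc Dt etac etad Pd Pc Smin Smax s0 (t + \<tau>) 0" if "\<tau> \<le> n" for \<tau>
  proof -
    have k: "1 \<le> t + \<tau>" "t + \<tau> \<le> T" using t1 tn that by auto
    have "slow Dt etac etad Pd Pc Smin Smax s0 (t + \<tau> - 1) \<le> sp (t + \<tau> - 1)" using slow_le k by simp
    then have "(Smax - sp (t + \<tau> - 1)) / (Dt * etac) \<le> (Smax - slow Dt etac etad Pd Pc Smin Smax s0 (t + \<tau> - 1)) / (Dt * etac)"
      using Dt ec by (simp add: divide_right_mono)
    then show ?thesis using pc_bound[OF k] pc_Pce[OF k] unfolding cc_def pos_def by simp
  qed
  have BP: "B \<tau> \<le> P" if "\<tau> \<le> n" for \<tau> unfolding B_def using B_le[OF K0 KM P0 that] .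
  have wP: "\<forall>\<tau>\<le>n. w \<tau> \<le> P"
  proof (intro allI impI)
    fix \<tau> assume h: "\<tau> \<le> n"
    have k: "1 \<le> t + \<tau>" "t + \<tau> \<le> T" using t1 tn h by auto
    show "w \<tau> \<le> P"
    proof (cases "u (t + \<tau>) = 0")
      case True then show ?thesis using pd_Pde[OF k] unfolding w_def P_def by simp
    next
      case False
      then have "u (t + \<tau>) = 1" using step(3)[OF k] by auto
      then have "pd (t + \<tau>) = 0" using step(4)[OF k] step(1)[OF k] by auto
      moreover have "- (etad * etac) * cc Dt etac etad Pd Pc Smin Smax s0 (t + \<tau>) 0 \<le> P"
      proof -
        have "0 \<le> (etad * etac) * cc Dt etac etad Pd Pc Smin Smax s0 (t + \<tau>) 0"
          using ccpos[of "t+\<tau>"] ed ec by simp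
        then show ?thesis using P0 by simp
      qed
      ultimately show ?thesis unfolding w_def using rho[OF h] BP[OF h] \<open>u (t + \<tau>) = 1\<close> by simp
    qed
  qed
  have eP: "\<forall>\<tau>\<le>n. e \<tau> \<le> P"
  proof (intro allI impI)
    fix \<tau> assume h: "\<tau> \<le> n"
    have k: "1 \<le> t + \<tau>" "t + \<tau> \<le> T" using t1 tn h by auto
    have "0 \<le> etad * etac * pc (t + \<tau>)" using step(2)[OF k] ed ec by simp
    then show "e \<tau> \<le> P" using pd_Pde[OF k] unfolding e_def P_def by simp
  qed
  have alt: "\<forall>\<tau>\<le>n. w \<tau> \<le> e \<tau> \<or> w \<tau> = B \<tau>"
  proof (intro allI impI)
    fix \<tau> assume h: "\<tau> \<le> n"
    have k: "1 \<le> t + \<tau>" "t + \<tau> \<le> T" using t1 tn h by auto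
    show "w \<tau> \<le> e \<tau> \<or> w \<tau> = B \<tau>"
    proof (cases "u (t + \<tau>) = 0")
      case True
      then have "pc (t + \<tau>) = 0" using step(5)[OF k] step(2)[OF k] by auto
      then show ?thesis using True unfolding w_def e_def by simp
    next
      case False
      then have u1: "u (t + \<tau>) = 1" using step(3)[OF k] by auto
      then have pd0: "pd (t + \<tau>) = 0" using step(4)[OF k] step(1)[OF k] by auto
      have "- (etad * etac) * cc Dt etac etad Pd Pc Smin Smax s0 (t + \<tau>) 0 \<le> - (etad * etac) * pc (t + \<tau>)"
        using pc_cc[OF h] ed ec by simp
      then show ?thesis unfolding w_def e_def using rho[OF h] u1 pd0 by (auto simp: max_def)
    qed
  qed
  have ef: "\<forall>\<tau>\<le>n. e \<tau> = f (Suc \<tau>) - f \<tau>"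
  proof (intro allI impI)
    fix \<tau> assume h: "\<tau> \<le> n"
    have k: "1 \<le> t + \<tau>" "t + \<tau> \<le> T" using t1 tn h by auto
    have "f (Suc \<tau>) - f \<tau> = (sp (t + \<tau> - 1) - sp (t + \<tau>)) * etad / Dt"
      unfolding f_def using t1 Dt by (simp add: field_simps)
    also have "\<dots> = - (Dt * (etac * pc (t + \<tau>) - pd (t + \<tau>) / etad)) * etad / Dt"
      using step(8)[OF k] by simp
    also have "\<dots> = e \<tau>" unfolding e_def using Dt ec ed by (simp add: field_simps)
    finally show "e \<tau> = f (Suc \<tau>) - f \<tau>" by simp
  qed
  have fK: "\<forall>m\<le>Suc n. f m - f 0 \<le> K"
  proof (intro allI impI)
    fix m assume h: "m \<le> Suc n"
    have a: "Smin \<le> sp (t + m - 1)" using sp_bounds[of "t + m - 1"] h tn t1 by auto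
    have b: "sp (t - 1) \<le> supp Dt etac etad Pd Pc Smin Smax s0 (t - 1)" using supp_ge[of "t-1"] tn by simp
    have "f m - f 0 = (sp (t - 1) - sp (t + m - 1)) * etad / Dt" unfolding f_def using Dt by (simp add: field_simps)
    also have "\<dots> \<le> K" unfolding K_def using a b Dt ed by (simp add: divide_right_mono mult_right_mono)
    finally show "f m - f 0 \<le> K" .
  qed
  have fM: "\<forall>a\<le>Suc n. \<forall>b\<le>Suc n. f b - f a \<le> M"
  proof (intro allI impI)
    fix a b assume h: "a \<le> Suc n" "b \<le> Suc n"
    have x: "Smin \<le> sp (t + b - 1)" using sp_bounds[of "t + b - 1"] h tn t1 by auto
    have y: "sp (t + a - 1) \<le> Smax" using sp_bounds[of "t + a - 1"] h tn t1 by auto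
    have "f b - f a = (sp (t + a - 1) - sp (t + b - 1)) * etad / Dt" unfolding f_def using Dt by (simp add: field_simps)
    also have "\<dots> \<le> M" unfolding M_def using x y Dt ed by (simp add: divide_right_mono mult_right_mono)
    finally show "f b - f a \<le> M" .
  qed
  have "(\<Sum>\<tau><Suc n. w \<tau>) \<le> min (real (Suc n) * P) K"
    by (rule key[OF P0 wP eP _ ef fK fM]) (use alt in \<open>simp add: B_def\<close>)
  moreover have "(\<Sum>\<tau><Suc n. w \<tau>) = (\<Sum>tau\<in>{0..n}. pd (t + tau))
           + (\<Sum>tau\<in>{0..n}. rhod Dt etac etad Pd Pc Smin Smax s0 t tau n * u (t + tau))"
    unfolding w_def by (simp add: sum.distrib atLeast0AtMost lessThan_Suc_atMost)
  moreover have "(\<Sum>tau\<in>{0..n}. dd Dt etac etad Pd Pc Smin Smax s0 t tau) = min (real (Suc n) * P) K"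
    using ccsum[of "Suc n"] by (simp add: atLeast0AtMost lessThan_Suc_atMost)
  ultimately show ?thesis by simp
qed

end

theorem mainTheorem6:
  fixes T :: nat and Dt etac etad Pd Pc Smin Smax s0 :: real
    and pd pc s u :: "nat \<Rightarrow> real" and t taub :: nat
  assumes "1 \<le> T" and "0 < Dt"
    and "0 < etac" and "etac \<le> 1" and "0 < etad" and "etad \<le> 1"
    and "0 < Pd" and "0 < Pc"
    and "Smin < Smax" and "Smin \<le> s0" and "s0 \<le> Smax"
    and "in_P01 T Dt etac etad Pd Pc Smin Smax s0 pd pc s u"
    and "1 \<le> t" and "t \<le> T" and "taub \<le> T - t"
  shows "((\<Sum>tau\<in>{0..taub}. pc (t + tau))
           + (\<Sum>tau\<in>{0..taub}. rhoc Dt etac etad Pd Pc Smin Smax s0 t tau taub * (1 - u (t + tau)))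
         \<le> (\<Sum>tau\<in>{0..taub}. cc Dt etac etad Pd Pc Smin Smax s0 t tau))
         \<and> ((\<Sum>tau\<in>{0..taub}. pd (t + tau))
           + (\<Sum>tau\<in>{0..taub}. rhod Dt etac etad Pd Pc Smin Smax s0 t tau taub * u (t + tau))
         \<le> (\<Sum>tau\<in>{0..taub}. dd Dt etac etad Pd Pc Smin Smax s0 t tau))"
proof -
  have tn: "t + taub \<le> T" using assms by simp
  show ?thesis
    using charge[OF assms(2,3,5,7,8,9,10,11,12,13) tn] discharge[OF assms(2,3,5,7,8,9,10,11,12,13) tn]
    by simp
qed

end
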